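(* Let $f$ be a non-constant rational function with $f(z)\neq 0$ for all $z\in\mathbb{C}$, all of whose poles are multiple. Let $Q[f]$ be the differential polynomial described in the context, of weight $w$. Then, for any $a\in\mathbb{C}$, the function $Q[f](z)-\frac{1}{z+a}$ has at least $w$ distinct zeros in $\mathbb{C}$.
   Context: Fix integers $k\geq 1$ and non-negative integers $p_0,p_1,\ldots,p_k,q_1,\ldots,q_k$ with $p_i\geq q_i$ for $i=1,\ldots,k$ and $q':=\sum_{i=1}^k q_i>0$. For a meromorphic function $f$, set $$Q[f]:=f^{p_0}\,(f^{p_1})^{(q_1)}\,(f^{p_2})^{(q_2)}\cdots(f^{p_k})^{(q_k)},$$ where $(f^{p})^{(q)}$ denotes the $q$-th derivative of $f^p$. With $p':=\sum_{i=1}^k p_i$, the degree of $Q[f]$ is $d:=p_0+p'$ and its weight is $w:=d+q'$. *)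

theory Defs
  imports "HOL-Analysis.Analysis" "HOL-Computational_Algebra.Polynomial"
begin

text \<open>For a meromorphic f this is
  evaluated at points where f is holomorphic.\<close>
definition Qdiff :: "(complex \<Rightarrow> complex) \<Rightarrow> nat \<Rightarrow> (nat \<Rightarrow> nat) \<Rightarrow> (nat \<Rightarrow> nat) \<Rightarrow> complex \<Rightarrow> complex" where
  "Qdiff f k p q z = f z ^ p 0 * (\<Prod>i\<in>{1..k}. (deriv ^^ q i) (\<lambda>x. f x ^ p i) z)"

definition Qweight :: "nat \<Rightarrow> (nat \<Rightarrow> nat) \<Rightarrow> (nat \<Rightarrow> nat) \<Rightarrow> nat" where
  "Qweight k p q = p 0 + (\<Sum>i\<in>{1..k}. p i) + (\<Sum>i\<in>{1..k}. q i)"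

end

theory Submission
  imports Defs "HOL-Computational_Algebra.Fundamental_Theorem_Algebra"
begin


lemma coeff_mult_bounds:
  fixes a b :: "'a::comm_semiring_1 poly"
  assumes "degree a \<le> i" "degree b \<le> j"
  shows "coeff (a * b) (i + j) = coeff a i * coeff b j"
proof -
  have "coeff (a * b) (i + j) = (\<Sum>x\<le>i+j. if x = i then coeff a i * coeff b j else 0)"
    unfolding coeff_mult
  proof (rule sum.cong[OF refl])
    fix x assume "x \<in> {..i+j}"
    show "coeff a x * coeff b (i + j - x) = (if x = i then coeff a i * coeff b j else 0)"
    proof (cases "x < i")
      case True
      then have "coeff b (i + j - x) = 0" using assms(2) by (intro coeff_eq_0) auto
      then show ?thesis using True by simp
    next
      case False
      show ?thesis
      proof (cases "x = i")
        case False
        then have "coeff a x = 0" using \<open>\<not> x < i\<close> assms(1) by (intro coeff_eq_0) auto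
        then show ?thesis using False by simp
      qed simp
    qed
  qed
  also have "\<dots> = coeff a i * coeff b j" by simp
  finally show ?thesis .
qed

lemma step_coeff:
  fixes A R0 S :: "complex poly" and u v :: nat
  assumes R0deg: "degree R0 = m" and R0mon: "coeff R0 m = 1" and m1: "m \<ge> 1"
    and Sdeg: "degree S \<le> m - 1" and Scoeff: "coeff S (m - 1) = N"
    and Adeg: "degree A \<le> \<alpha>"
  defines "A2 \<equiv> pderiv A * R0 - A * (smult (of_nat u) S + smult (of_nat v) (pderiv R0))"
  shows "degree A2 \<le> \<alpha> + (m - 1)"
    and "coeff A2 (\<alpha> + (m - 1)) = coeff A \<alpha> * (of_nat \<alpha> - of_nat u * N - of_nat v * of_nat m)"
proof -
  have dR0': "degree (pderiv R0) \<le> m - 1" using R0deg by (simp add: degree_pderiv)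
  have cR0': "coeff (pderiv R0) (m - 1) = of_nat m"
    using m1 R0mon by (simp add: coeff_pderiv)
  define T where "T = smult (of_nat u) S + smult (of_nat v) (pderiv R0)"
  have dT: "degree T \<le> m - 1" unfolding T_def
    by (intro degree_add_le order.trans[OF degree_smult_le] Sdeg dR0')
  have cT: "coeff T (m - 1) = of_nat u * N + of_nat v * of_nat m"
    unfolding T_def using Scoeff cR0' by simp
  have dAT: "degree (A * T) \<le> \<alpha> + (m - 1)"
    using degree_mult_le[of A T] Adeg dT by linarith
  have cAT: "coeff (A * T) (\<alpha> + (m - 1)) = coeff A \<alpha> * (of_nat u * N + of_nat v * of_nat m)"
    using coeff_mult_bounds[OF Adeg dT] cT by simp
  have dA'R: "degree (pderiv A * R0) \<le> \<alpha> + (m - 1)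
        \<and> coeff (pderiv A * R0) (\<alpha> + (m - 1)) = coeff A \<alpha> * of_nat \<alpha>"
  proof (cases "\<alpha> = 0")
    case True
    then have "pderiv A = 0" using Adeg by (simp add: pderiv_eq_0_iff)
    then show ?thesis using True by simp
  next
    case False
    have d1: "degree (pderiv A) \<le> \<alpha> - 1" using Adeg by (simp add: degree_pderiv)
    have "degree (pderiv A * R0) \<le> \<alpha> - 1 + m"
      using degree_mult_le[of "pderiv A" R0] d1 R0deg by linarith
    moreover have "coeff (pderiv A * R0) (\<alpha> - 1 + m) = coeff A \<alpha> * of_nat \<alpha>"
      using coeff_mult_bounds[OF d1, of R0 m] R0deg R0mon False
      by (simp add: coeff_pderiv mult.commute)
    moreover have "\<alpha> - 1 + m = \<alpha> + (m - 1)" using False m1 by simp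
    ultimately show ?thesis by simp
  qed
  show "degree A2 \<le> \<alpha> + (m - 1)" unfolding A2_def T_def[symmetric]
    using dA'R dAT by (intro degree_diff_le) auto
  show "coeff A2 (\<alpha> + (m - 1)) = coeff A \<alpha> * (of_nat \<alpha> - of_nat u * N - of_nat v * of_nat m)"
    unfolding A2_def T_def[symmetric] using dA'R cAT by (simp add: algebra_simps)
qed



lemma pderiv_lin_pow:
  fixes x :: complex
  shows "pderiv ([:-x,1:] ^ k) * [:-x,1:] = smult (of_nat k) ([:-x,1:] ^ k)"
proof (cases k)
  case 0 then show ?thesis by simp
next
  case (Suc j)
  have pL: "pderiv [:-x,1:] = 1" by (simp add: pderiv_pCons)
  have "pderiv ([:-x,1:] ^ Suc j) * [:-x,1:] = smult (of_nat (Suc j)) ([:-x,1:] ^ j * [:-x,1:])"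
    by (simp only: pderiv_power_Suc pL mult_1_right mult_smult_left)
  also have "\<dots> = smult (of_nat (Suc j)) ([:-x,1:] ^ Suc j)"
    by (simp only: power_Suc2)
  finally show ?thesis using Suc by simp
qed

lemma log_deriv_exists:
  fixes n :: "complex \<Rightarrow> nat"
  assumes "finite Z"
  shows "\<exists>S. pderiv (\<Prod>z\<in>Z. [:-z,1:] ^ n z) * (\<Prod>z\<in>Z. [:-z,1:]) = (\<Prod>z\<in>Z. [:-z,1:] ^ n z) * S
     \<and> degree S \<le> card Z - 1 \<and> coeff S (card Z - 1) = of_nat (\<Sum>z\<in>Z. n z) \<and> (Z = {} \<longrightarrow> S = 0)"
  using assms
proof (induction Z rule: finite_induct)
  case empty
  then show ?case by (intro exI[of _ 0]) simp
next
  case (insert x Z)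
  then obtain S where S: "pderiv (\<Prod>z\<in>Z. [:-z,1:] ^ n z) * (\<Prod>z\<in>Z. [:-z,1:]) = (\<Prod>z\<in>Z. [:-z,1:] ^ n z) * S"
    "degree S \<le> card Z - 1" "coeff S (card Z - 1) = of_nat (\<Sum>z\<in>Z. n z)" "Z = {} \<longrightarrow> S = 0" by blast
  define F where "F = (\<Prod>z\<in>Z. [:-z,1:] ^ n z)"
  define R0 where "R0 = (\<Prod>z\<in>Z. [:-z,1:])"
  define L where "L = [:-x,1:]"
  define S' where "S' = smult (of_nat (n x)) R0 + L * S"
  have dR0: "degree R0 = card Z" unfolding R0_def
    by (subst degree_prod_eq_sum_degree) auto
  have cR0: "coeff R0 (card Z) = 1"
  proof -
    have "lead_coeff R0 = 1" unfolding R0_def by (simp add: lead_coeff_prod)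
    then show ?thesis using dR0 by simp
  qed
  have eq: "pderiv (L ^ n x * F) * (L * R0) = (L ^ n x * F) * S'"
  proof -
    have "pderiv (L ^ n x * F) * (L * R0) = (pderiv (L ^ n x) * L) * F * R0 + L ^ n x * L * (pderiv F * R0)"
      by (simp add: pderiv_mult ring_distribs mult_ac)
    also have "\<dots> = (L ^ n x * F) * S'"
      unfolding pderiv_lin_pow[of x, folded L_def] S(1)[folded F_def R0_def] S'_def
      by (simp only: distrib_left mult_ac mult_smult_left mult_smult_right)
    finally show ?thesis .
  qed
  have dS': "degree S' \<le> card Z"
  proof -
    have "degree (L * S) \<le> card Z"
    proof (cases "Z = {}")
      case True then show ?thesis using S(4) by simp
    next
      case False
      then have "card Z \<ge> 1" using insert(1) by (simp add: Suc_leI card_gt_0_iff)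
      then show ?thesis using degree_mult_le[of L S] S(2) unfolding L_def by simp
    qed
    then show ?thesis unfolding S'_def using dR0
      by (intro degree_add_le order.trans[OF degree_smult_le]) auto
  qed
  have cS': "coeff S' (card Z) = of_nat (n x) + of_nat (\<Sum>z\<in>Z. n z)"
  proof -
    have "coeff (L * S) (card Z) = of_nat (\<Sum>z\<in>Z. n z)"
    proof (cases "Z = {}")
      case True then show ?thesis using S(4) by simp
    next
      case False
      then have c1: "card Z = 1 + (card Z - 1)" using insert(1) by (simp add: card_gt_0_iff)
      have "coeff (L * S) (1 + (card Z - 1)) = coeff L 1 * coeff S (card Z - 1)"
        by (rule coeff_mult_bounds) (use S(2) in \<open>auto simp: L_def\<close>)
      then show ?thesis using c1 S(3) by (simp add: L_def)
    qed
    then show ?thesis unfolding S'_def using cR0 by simp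
  qed
  have p1: "(\<Prod>z\<in>insert x Z. [:-z,1:] ^ n z) = L ^ n x * F"
    using insert(1,2) by (simp add: F_def L_def)
  have p2: "(\<Prod>z\<in>insert x Z. [:-z,1:]) = L * R0"
    using insert(1,2) by (simp add: R0_def L_def)
  have c: "card (insert x Z) - 1 = card Z" using insert(1,2) by simp
  have s: "(\<Sum>z\<in>insert x Z. n z) = n x + (\<Sum>z\<in>Z. n z)" using insert(1,2) by simp
  show ?case unfolding p1 p2 c s using eq dS' cS' by (intro exI[of _ S']) simp
qed

lemma pderiv_pow_log:
  fixes X Y T :: "complex poly"
  assumes "pderiv X * Y = X * T"
  shows "pderiv (X ^ u) * Y = X ^ u * smult (of_nat u) T"
proof (induction u)
  case 0 then show ?case by simp
next
  case (Suc u)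
  have "pderiv (X ^ Suc u) * Y = X * (pderiv (X ^ u) * Y) + X ^ u * (pderiv X * Y)"
    by (simp add: pderiv_mult algebra_simps)
  also have "\<dots> = X ^ Suc u * smult (of_nat (Suc u)) T"
    unfolding Suc assms by (simp add: algebra_simps smult_add_left)
  finally show ?case .
qed

lemma pderiv_RR0:
  fixes R R0 S :: "complex poly"
  assumes "pderiv R * R0 = R * S"
  shows "pderiv (R ^ u * R0 ^ v) * R0 = (R ^ u * R0 ^ v) * (smult (of_nat u) S + smult (of_nat v) (pderiv R0))"
proof -
  have a: "pderiv (R ^ u) * R0 = R ^ u * smult (of_nat u) S" by (rule pderiv_pow_log[OF assms])
  have b: "pderiv (R0 ^ v) * R0 = R0 ^ v * smult (of_nat v) (pderiv R0)"
    by (rule pderiv_pow_log) (simp add: mult.commute)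
  have "pderiv (R ^ u * R0 ^ v) * R0 = R ^ u * (pderiv (R0 ^ v) * R0) + R0 ^ v * (pderiv (R ^ u) * R0)"
    by (simp only: pderiv_mult distrib_right mult.assoc)
  also have "\<dots> = (R ^ u * R0 ^ v) * (smult (of_nat u) S + smult (of_nat v) (pderiv R0))"
    unfolding a b by (simp only: distrib_left mult_ac add.commute)
  finally show ?thesis .
qed



fun Apol :: "complex poly \<Rightarrow> complex poly \<Rightarrow> complex poly \<Rightarrow> nat \<Rightarrow> nat \<Rightarrow> complex poly" where
  "Apol P0 R0 S p 0 = P0 ^ p"
| "Apol P0 R0 S p (Suc n) = pderiv (Apol P0 R0 S p n) * R0
     - Apol P0 R0 S p n * (smult (of_nat p) S + smult (of_nat n) (pderiv R0))"

lemma Apol_deriv: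
  fixes f :: "complex \<Rightarrow> complex" and P R R0 S :: "complex poly"
  assumes f: "\<And>z. f z = poly P z / poly R z" and RS: "pderiv R * R0 = R * S"
    and R0nz: "\<And>z. poly R z \<noteq> 0 \<Longrightarrow> poly R0 z \<noteq> 0" and z: "poly R z \<noteq> 0"
  shows "(deriv ^^ n) (\<lambda>x. f x ^ p) z = poly (Apol P R0 S p n) z / poly (R ^ p * R0 ^ n) z"
  using z
proof (induction n arbitrary: z)
  case 0
  then show ?case by (simp add: f power_divide poly_power)
next
  case (Suc n)
  define A where "A = Apol P R0 S p n"
  define D where "D = R ^ p * R0 ^ n"
  define T where "T = smult (of_nat p) S + smult (of_nat n) (pderiv R0)"
  have opn: "open {x. poly R x \<noteq> 0}"
    by (rule open_Collect_neq) (auto intro: continuous_intros)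
  have ev: "eventually (\<lambda>x. (deriv ^^ n) (\<lambda>x. f x ^ p) x = poly A x / poly D x) (nhds z)"
  proof -
    have "eventually (\<lambda>x. x \<in> {x. poly R x \<noteq> 0}) (nhds z)"
      by (rule eventually_nhds_in_open[OF opn]) (use Suc.prems in simp)
    then show ?thesis
      by (rule eventually_mono) (use Suc.IH in \<open>simp add: A_def D_def\<close>)
  qed
  have e1: "(deriv ^^ Suc n) (\<lambda>x. f x ^ p) z = deriv (\<lambda>x. poly A x / poly D x) z"
    using deriv_cong_ev[OF ev refl] by simp
  have R0z: "poly R0 z \<noteq> 0" using R0nz Suc.prems by blast
  have Dz: "poly D z \<noteq> 0" using R0z Suc.prems by (simp add: D_def poly_power)
  have e2: "deriv (\<lambda>x. poly A x / poly D x) z =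
      (poly (pderiv A) z * poly D z - poly (pderiv D) z * poly A z) / (poly D z ^ Suc (Suc 0))"
    by (rule DERIV_imp_deriv, rule DERIV_quotient) (use Dz in auto)
  have id: "poly (pderiv D) z * poly R0 z = poly D z * poly T z"
    using arg_cong[OF pderiv_RR0[OF RS, of p n], of "\<lambda>q. poly q z"]
    by (simp add: D_def T_def)
  have Anew: "Apol P R0 S p (Suc n) = pderiv A * R0 - A * T" by (simp add: A_def T_def)
  have Dnew: "poly (R ^ p * R0 ^ Suc n) z = poly D z * poly R0 z" by (simp add: D_def poly_power)
  define a' a d d' r0 t where "a' = poly (pderiv A) z" "a = poly A z" "d = poly D z"
    "d' = poly (pderiv D) z" "r0 = poly R0 z" "t = poly T z"
  have id': "d' * r0 = d * t" using id by (simp add: a'_a_d_d'_r0_t_def)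
  have sq: "d ^ Suc (Suc 0) = d * d" by simp
  have key: "(a' * d - d' * a) * (d * r0) - (a' * r0 - a * t) * (d * d) = - (a * d) * (d' * r0 - d * t)"
    by (simp add: algebra_simps)
  then have key2: "(a' * d - d' * a) * (d * r0) = (a' * r0 - a * t) * (d * d)"
    using id' by simp
  have "d \<noteq> 0" "r0 \<noteq> 0" using Dz R0z by (auto simp: a'_a_d_d'_r0_t_def)
  then have "(a' * d - d' * a) / d ^ Suc (Suc 0) = (a' * r0 - a * t) / (d * r0)"
    unfolding sq using key2 by (simp add: frac_eq_eq)
  then show ?case unfolding e1 e2 Anew Dnew by (simp add: a'_a_d_d'_r0_t_def)
qed

lemma Apol_degree:
  fixes P R0 S :: "complex poly"
  assumes P: "degree P = 0" "P \<noteq> 0"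
    and R0deg: "degree R0 = m" and R0mon: "coeff R0 m = 1" and m1: "m \<ge> 1"
    and Sdeg: "degree S \<le> m - 1" and Scoeff: "coeff S (m - 1) = of_nat N" and N1: "N \<ge> 1"
    and pn: "p \<ge> 1 \<or> n = 0"
  shows "degree (Apol P R0 S p n) \<le> n * (m - 1) \<and> coeff (Apol P R0 S p n) (n * (m - 1)) \<noteq> 0"
  using pn
proof (induction n)
  case 0
  have "coeff P 0 \<noteq> 0" using P by (metis leading_coeff_0_iff)
  then show ?case using P by (simp add: coeff_0_power degree_power_eq)
next
  case (Suc n)
  then have p1: "p \<ge> 1" by simp
  then have IH: "degree (Apol P R0 S p n) \<le> n * (m - 1)" "coeff (Apol P R0 S p n) (n * (m - 1)) \<noteq> 0"
    using Suc.IH by auto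
  note st = step_coeff[OF R0deg R0mon m1 Sdeg Scoeff IH(1), of p n]
  have eq: "Suc n * (m - 1) = n * (m - 1) + (m - 1)" by simp
  have ne: "(of_nat (n * (m - 1)) - of_nat p * of_nat N - of_nat n * of_nat m :: complex) \<noteq> 0"
  proof
    assume "(of_nat (n * (m - 1)) - of_nat p * of_nat N - of_nat n * of_nat m :: complex) = 0"
    then have "(of_nat (n * (m - 1)) :: complex) = of_nat (p * N + n * m)" by (simp add: algebra_simps)
    then have "n * (m - 1) = p * N + n * m" using of_nat_eq_iff by blast
    moreover have "n * (m - 1) \<le> n * m" by simp
    moreover have "p * N \<ge> 1" using p1 N1 by simp
    ultimately show False by linarith
  qed
  show ?case unfolding eq using st IH(2) ne by simp
qed

lemma sum_count_le_size:
  assumes "finite A"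
  shows "sum (count M) A \<le> size M"
proof -
  have "sum (count M) A = sum (count M) (A \<inter> set_mset M)"
    by (rule sum.mono_neutral_right) (use assms in \<open>auto simp: count_eq_zero_iff\<close>)
  also have "\<dots> \<le> sum (count M) (set_mset M)" by (rule sum_mono2) auto
  also have "\<dots> = size M" by (simp add: size_multiset_overloaded_eq)
  finally show ?thesis .
qed

lemma degree_eq_sum_order:
  fixes p :: "complex poly"
  assumes "p \<noteq> 0"
  shows "degree p = (\<Sum>r\<in>{r. poly p r = 0}. order r p)"
proof -
  have "degree p = size (proots p)" by (simp add: size_proots_complex)
  also have "\<dots> = sum (count (proots p)) (set_mset (proots p))" by (simp add: size_multiset_overloaded_eq)
  also have "\<dots> = (\<Sum>r\<in>{r. poly p r = 0}. order r p)" using assms by simp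
  finally show ?thesis .
qed

lemma sum_order_le_degree:
  fixes p :: "complex poly"
  assumes "p \<noteq> 0" "finite A"
  shows "(\<Sum>r\<in>A. order r p) \<le> degree p"
proof -
  have "(\<Sum>r\<in>A. order r p) = sum (count (proots p)) A" using assms by simp
  also have "\<dots> \<le> size (proots p)" by (rule sum_count_le_size[OF assms(2)])
  also have "\<dots> \<le> degree p" by (rule size_proots_le)
  finally show ?thesis .
qed

lemma dvd_pderiv_pow:
  fixes X :: "complex poly"
  assumes "[:-r,1:] ^ Suc j dvd X"
  shows "[:-r,1:] ^ j dvd pderiv X"
proof -
  obtain G where G: "X = [:-r,1:] ^ Suc j * G" using assms by blast
  have "pderiv X = [:-r,1:] ^ j * ([:-r,1:] * pderiv G + G * smult (of_nat (Suc j)) (pderiv [:-r,1:]))"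
    unfolding G pderiv_mult pderiv_power_Suc by (simp add: algebra_simps)
  then show ?thesis by simp
qed



theorem lemma5:
  fixes P R :: "complex poly" and f :: "complex \<Rightarrow> complex"
    and k :: nat and p q :: "nat \<Rightarrow> nat" and a :: complex
  assumes rat: "\<And>z. f z = poly P z / poly R z"
    and R_nz: "R \<noteq> 0"
    and cop: "coprime P R"
    and nonconst: "\<not> (\<exists>c. \<forall>z. poly R z \<noteq> 0 \<longrightarrow> f z = c)"
    and no_zeros: "\<And>z. poly R z \<noteq> 0 \<Longrightarrow> f z \<noteq> 0"
    and multiple_poles: "\<And>z. poly R z = 0 \<Longrightarrow> order z R \<ge> 2"
    and k: "k \<ge> 1"
    and pq: "\<And>i. i \<in> {1..k} \<Longrightarrow> p i \<ge> q i"
    and qpos: "(\<Sum>i\<in>{1..k}. q i) > 0"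
  shows "infinite {z. poly R z \<noteq> 0 \<and> z + a \<noteq> 0 \<and> Qdiff f k p q z - 1 / (z + a) = 0}
         \<or> Qweight k p q \<le> card {z. poly R z \<noteq> 0 \<and> z + a \<noteq> 0 \<and> Qdiff f k p q z - 1 / (z + a) = 0}"
proof -
  have Pnr: "poly P z \<noteq> 0" for z
  proof
    assume Pz: "poly P z = 0"
    show False
    proof (cases "poly R z = 0")
      case False
      then have "f z = 0" using rat Pz by simp
      with no_zeros False show False by blast
    next
      case True
      have "[:-z,1:] dvd P" "[:-z,1:] dvd R" using Pz True by (simp_all add: poly_eq_0_iff_dvd)
      then have "is_unit [:-z,1:]" using cop coprime_common_divisor by blast
      then show False by (simp add: is_unit_iff_degree)
    qed
  qed
  have P0: "P \<noteq> 0" using Pnr by (metis poly_0)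
  have Pdeg: "degree P = 0"
    using Pnr by (metis constant_degree fundamental_theorem_of_algebra)
  define Z where "Z = {z. poly R z = 0}"
  have finZ: "finite Z" unfolding Z_def using poly_roots_finite[OF R_nz] .
  define F where "F = (\<Prod>z\<in>Z. [:-z,1:] ^ order z R)"
  define R0 where "R0 = (\<Prod>z\<in>Z. [:-z,1:])"
  define m where "m = card Z"
  define N where "N = degree R"
  have Rdec: "R = smult (lead_coeff R) F"
    unfolding F_def Z_def by (rule complex_poly_decompose[symmetric])
  obtain S0 where S0: "pderiv F * R0 = F * S0" "degree S0 \<le> m - 1"
    "coeff S0 (m - 1) = of_nat (\<Sum>z\<in>Z. order z R)"
    using log_deriv_exists[OF finZ, of "\<lambda>z. order z R"] unfolding F_def R0_def m_def by blast
  have RS: "pderiv R * R0 = R * S0"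
  proof -
    have "pderiv (smult (lead_coeff R) F) * R0 = smult (lead_coeff R) F * S0"
      by (simp only: pderiv_smult mult_smult_left S0(1))
    then show ?thesis using Rdec by simp
  qed
  have Nsum: "N = (\<Sum>z\<in>Z. order z R)"
    unfolding N_def Z_def by (rule degree_eq_sum_order[OF R_nz])
  have Scoeff: "coeff S0 (m - 1) = of_nat N" using S0(3) Nsum by simp
  have Rdeg: "degree R \<ge> 1"
  proof (rule ccontr)
    assume "\<not> degree R \<ge> 1"
    then have "degree R = 0" by simp
    then obtain r where r: "R = [:r:]" by (metis degree_eq_zeroE)
    obtain c where c: "P = [:c:]" using Pdeg by (metis degree_eq_zeroE)
    have "\<forall>z. poly R z \<noteq> 0 \<longrightarrow> f z = c / r" using rat r c by simp
    then show False using nonconst by blast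
  qed
  have Zne: "Z \<noteq> {}"
  proof -
    have "\<not> constant (poly R)" using Rdeg by (simp add: constant_degree)
    then obtain z where "poly R z = 0" using fundamental_theorem_of_algebra by blast
    then show ?thesis unfolding Z_def by blast
  qed
  have m1: "m \<ge> 1" unfolding m_def using finZ Zne by (simp add: Suc_leI card_gt_0_iff)
  have N2m: "N \<ge> 2 * m"
  proof -
    have "(\<Sum>z\<in>Z. 2) \<le> (\<Sum>z\<in>Z. order z R)"
      by (rule sum_mono) (use multiple_poles in \<open>auto simp: Z_def\<close>)
    then show ?thesis unfolding Nsum m_def by simp
  qed
  have R0deg: "degree R0 = m" unfolding R0_def m_def
    by (subst degree_prod_eq_sum_degree) auto
  have R0mon: "coeff R0 m = 1"
  proof -
    have "lead_coeff R0 = 1" unfolding R0_def by (simp add: lead_coeff_prod)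
    then show ?thesis using R0deg by simp
  qed
  have R0nz0: "R0 \<noteq> 0" using R0mon by auto
  have polyR0: "poly R0 z = 0 \<longleftrightarrow> poly R z = 0" for z
    unfolding R0_def using finZ by (simp add: poly_prod Z_def)
  have R0nz: "poly R z \<noteq> 0 \<Longrightarrow> poly R0 z \<noteq> 0" for z using polyR0 by blast
  define dd where "dd = p 0 + (\<Sum>i\<in>{1..k}. p i)"
  define qq where "qq = (\<Sum>i\<in>{1..k}. q i)"
  define B where "B = P ^ p 0 * (\<Prod>i\<in>{1..k}. Apol P R0 S0 (p i) (q i))"
  define E where "E = R ^ dd * R0 ^ qq"
  have QB: "Qdiff f k p q z = poly B z / poly E z" if z: "poly R z \<noteq> 0" for z
  proof -
    have "Qdiff f k p q z = (poly P z / poly R z) ^ p 0 *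
        (\<Prod>i\<in>{1..k}. poly (Apol P R0 S0 (p i) (q i)) z / poly (R ^ p i * R0 ^ q i) z)"
    proof -
      have "(\<Prod>i\<in>{1..k}. (deriv ^^ q i) (\<lambda>x. f x ^ p i) z)
          = (\<Prod>i\<in>{1..k}. poly (Apol P R0 S0 (p i) (q i)) z / poly (R ^ p i * R0 ^ q i) z)"
        by (rule prod.cong[OF refl]) (rule Apol_deriv[OF rat RS R0nz z])
      then show ?thesis unfolding Qdiff_def rat[of z] by simp
    qed
    also have "\<dots> = poly B z / poly E z"
      by (simp add: B_def E_def dd_def qq_def poly_prod prod_dividef prod.distrib power_sum
          power_add power_divide poly_power)
    finally show ?thesis .
  qed
  have Ai: "Apol P R0 S0 (p i) (q i) \<noteq> 0 \<and> degree (Apol P R0 S0 (p i) (q i)) \<le> q i * (m - 1)"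
    if i: "i \<in> {1..k}" for i
  proof -
    have N1: "N \<ge> 1" using N2m m1 by simp
    have pn: "p i \<ge> 1 \<or> q i = 0" using pq[OF i] by auto
    from Apol_degree[OF Pdeg P0 R0deg R0mon m1 S0(2) Scoeff N1 pn] show ?thesis by auto
  qed
  have Bnz: "B \<noteq> 0" unfolding B_def using P0 Ai by auto
  have Bdeg: "degree B \<le> qq * (m - 1)"
  proof -
    have "degree (\<Prod>i\<in>{1..k}. Apol P R0 S0 (p i) (q i)) \<le> (\<Sum>i\<in>{1..k}. q i * (m - 1))"
      by (rule order.trans[OF degree_prod_sum_le]) (use Ai in \<open>auto intro: sum_mono\<close>)
    also have "\<dots> = qq * (m - 1)" unfolding qq_def by (simp add: sum_distrib_right)
    finally have "degree (\<Prod>i\<in>{1..k}. Apol P R0 S0 (p i) (q i)) \<le> qq * (m - 1)" .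
    moreover have "degree (P ^ p 0) = 0" using Pdeg P0 by (simp add: degree_power_eq)
    ultimately show ?thesis unfolding B_def
      using degree_mult_le[of "P ^ p 0" "\<Prod>i\<in>{1..k}. Apol P R0 S0 (p i) (q i)"] by linarith
  qed
  define W where "W = [:a,1:] * B"
  have a1: "[:a,1:] \<noteq> (0::complex poly)" by simp
  have Wnz: "W \<noteq> 0" unfolding W_def using a1 Bnz mult_eq_0_iff by blast
  define \<delta> where "\<delta> = degree W"
  have Wdeg: "\<delta> = degree B + 1" unfolding \<delta>_def W_def degree_mult_eq[OF a1 Bnz] by simp
  have dd1: "dd \<ge> 1"
  proof -
    obtain i where i: "i \<in> {1..k}" "q i > 0" using qpos
      by (metis (no_types, lifting) finite_atLeastAtMost gr0I sum_eq_0_iff less_irrefl)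
    have "p i \<le> (\<Sum>i\<in>{1..k}. p i)" by (rule member_le_sum) (use i in auto)
    then show ?thesis using pq[OF i(1)] i(2) unfolding dd_def by linarith
  qed
  have Enz: "E \<noteq> 0" unfolding E_def using R_nz R0nz0 by simp
  have Edeg: "degree E = dd * N + qq * m"
    unfolding E_def N_def using R_nz R0nz0 R0deg by (simp add: degree_mult_eq degree_power_eq)
  have NdN: "dd * N \<ge> N" using dd1 by simp
  have qqm: "qq * m = qq * (m - 1) + qq" using m1 by (metis add.commute mult.commute mult_Suc_right Suc_pred' less_le_trans zero_less_one)
  have dlt: "\<delta> < degree E" using Wdeg Bdeg Edeg NdN N2m m1 qqm by linarith
  define Num where "Num = W - E"
  have NumDeg: "degree Num = degree E"
  proof -
    have "degree (W + (- E)) = degree (- E)" by (rule degree_add_eq_right) (use dlt \<delta>_def in simp)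
    then show ?thesis by (simp add: Num_def)
  qed
  have Numnz: "Num \<noteq> 0" using NumDeg dlt by auto
  define T where "T = smult (of_nat dd) S0 + smult (of_nat qq) (pderiv R0)"
  have ET: "pderiv E * R0 = E * T" unfolding E_def T_def by (rule pderiv_RR0[OF RS])
  define H where "H = pderiv W * R0 - W * T"
  have Wle: "degree W \<le> \<delta>" by (simp add: \<delta>_def)
  note st = step_coeff[OF R0deg R0mon m1 S0(2) Scoeff Wle, of dd qq]
  have Hdeg: "degree H \<le> \<delta> + (m - 1)" using st(1) unfolding H_def T_def .
  have Hnz: "H \<noteq> 0"
  proof -
    have cW: "coeff W \<delta> \<noteq> 0" using Wnz unfolding \<delta>_def by simp
    have ne: "(of_nat \<delta> - of_nat dd * of_nat N - of_nat qq * of_nat m :: complex) \<noteq> 0"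
    proof
      assume "(of_nat \<delta> - of_nat dd * of_nat N - of_nat qq * of_nat m :: complex) = 0"
      then have "(of_nat \<delta> :: complex) = of_nat (dd * N + qq * m)" by (simp add: algebra_simps)
      then have "\<delta> = dd * N + qq * m" using of_nat_eq_iff by blast
      then show False using dlt Edeg by simp
    qed
    have "coeff H (\<delta> + (m - 1)) \<noteq> 0" using st(2) cW ne unfolding H_def T_def by simp
    then show ?thesis by auto
  qed
  have HNum: "H = pderiv Num * R0 - Num * T"
    unfolding H_def Num_def pderiv_diff left_diff_distrib ET by (simp add: algebra_simps)
  define RootsN where "RootsN = {r. poly Num r = 0}"
  have finN: "finite RootsN" unfolding RootsN_def using poly_roots_finite[OF Numnz] .
  define Good where "Good = {r \<in> RootsN. poly R r \<noteq> 0}"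
  have ordbound: "order r Num \<le> (if poly R r \<noteq> 0 then 1 else 0) + order r H" if r: "r \<in> RootsN" for r
  proof -
    define l where "l = order r Num"
    have l1: "l \<ge> 1" using r Numnz unfolding l_def RootsN_def by (simp add: Suc_leI order_gt_0_iff)
    define L where "L = [:-r,1:]"
    have dl: "L ^ l dvd Num" unfolding L_def l_def by (rule order_1)
    have lS: "l = Suc (l - 1)" using l1 by simp
    have d1: "L ^ (l - 1) dvd pderiv Num"
      using dvd_pderiv_pow[of r "l - 1" Num] dl lS unfolding L_def by simp
    have d2: "L ^ (l - 1) dvd Num" using dl by (metis dvd_trans le_imp_power_dvd diff_le_self)
    have "L ^ (l - 1) dvd H" unfolding HNum using d1 d2 by (intro dvd_diff dvd_mult2) auto
    then have o1: "l - 1 \<le> order r H" using Hnz by (simp add: order_divides L_def)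
    show ?thesis
    proof (cases "poly R r \<noteq> 0")
      case True then show ?thesis using o1 l_def by simp
    next
      case False
      then have "L dvd R0" using polyR0 by (simp add: poly_eq_0_iff_dvd L_def)
      then have "L ^ (l - 1) * L dvd pderiv Num * R0" using d1 by (simp add: mult_dvd_mono)
      then have "L ^ l dvd pderiv Num * R0" using lS by (metis power_Suc2)
      then have "L ^ l dvd H" unfolding HNum using dl dvd_mult2[OF dl, of T] by (metis dvd_diff)
      then have "l \<le> order r H" using Hnz by (simp add: order_divides L_def)
      then show ?thesis using False l_def by simp
    qed
  qed
  have "degree Num = (\<Sum>r\<in>RootsN. order r Num)"
    unfolding RootsN_def by (rule degree_eq_sum_order[OF Numnz])
  also have "\<dots> \<le> (\<Sum>r\<in>RootsN. (if poly R r \<noteq> 0 then 1 else 0) + order r H)"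
    by (rule sum_mono) (rule ordbound)
  also have "\<dots> = (\<Sum>r\<in>RootsN. (if poly R r \<noteq> 0 then 1 else 0)) + (\<Sum>r\<in>RootsN. order r H)"
    by (rule sum.distrib)
  also have "(\<Sum>r\<in>RootsN. (if poly R r \<noteq> 0 then 1 else 0)) = card Good"
    unfolding Good_def using finN by (simp add: sum.inter_filter[symmetric])
  also have "(\<Sum>r\<in>RootsN. order r H) \<le> degree H" by (rule sum_order_le_degree[OF Hnz finN])
  finally have cnt: "degree Num \<le> card Good + degree H" by simp
  have ddN: "dd * N \<ge> dd + m"
  proof -
    have "dd * N = dd * (N - 1) + dd" using N2m m1 by (metis add.commute mult.commute mult_Suc_right Suc_pred' less_le_trans zero_less_one mult_2 add_leD1) 
    moreover have "dd * (N - 1) \<ge> N - 1" using dd1 by simp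
    ultimately show ?thesis using N2m by linarith
  qed
  have main: "dd + qq \<le> card Good"
    using cnt NumDeg Edeg Hdeg Wdeg Bdeg qqm ddN m1 by linarith
  have sub: "Good \<subseteq> {z. poly R z \<noteq> 0 \<and> z + a \<noteq> 0 \<and> Qdiff f k p q z - 1 / (z + a) = 0}"
  proof
    fix z assume "z \<in> Good"
    then have Rz: "poly R z \<noteq> 0" and Nz: "poly Num z = 0" unfolding Good_def RootsN_def by auto
    have Ez: "poly E z \<noteq> 0" unfolding E_def using Rz R0nz[OF Rz] by (simp add: poly_power)
    have WE: "(z + a) * poly B z = poly E z" using Nz unfolding Num_def W_def by (simp add: algebra_simps)
    then have za: "z + a \<noteq> 0" and Bz: "poly B z \<noteq> 0" using Ez by auto
    have "Qdiff f k p q z = 1 / (z + a)" unfolding QB[OF Rz] WE[symmetric] using za Bz by simp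
    then show "z \<in> {z. poly R z \<noteq> 0 \<and> z + a \<noteq> 0 \<and> Qdiff f k p q z - 1 / (z + a) = 0}"
      using Rz za by simp
  qed
  have QW: "Qweight k p q = dd + qq" unfolding Qweight_def dd_def qq_def by simp
  show ?thesis
  proof (cases "finite {z. poly R z \<noteq> 0 \<and> z + a \<noteq> 0 \<and> Qdiff f k p q z - 1 / (z + a) = 0}")
    case True
    then have "card Good \<le> card {z. poly R z \<noteq> 0 \<and> z + a \<noteq> 0 \<and> Qdiff f k p q z - 1 / (z + a) = 0}"
      using sub by (rule card_mono)
    then show ?thesis using main QW by simp
  qed simp
qed

end
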